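(* In the setting of the adaptive mirror triangle method for the minimax problem (see context), for every step $k\ge0$ performed by the method and every $x\in Q$, $$A_{k+1}f(x_{k+1})-A_kf(x_k)+V(x,u_{k+1})-V(x,u_k)\le\alpha_{k+1}f(x),$$ where $\alpha_{k+1},A_{k+1},u_{k+1},x_{k+1}$ are the values accepted at step $k+1$.
   Context: $\mathbb{R}^n$ carries a norm $\|\cdot\|$ with dual norm $\|\lambda\|_*=\max_{\|\nu\|\le1}\langle\lambda,\nu\rangle$; $Q\subseteq\mathbb{R}^n$ closed convex; $f_1,\dots,f_M$ convex on $Q$, differentiable, with $\|\nabla f_i(x)-\nabla f_i(y)\|_*\le L\|x-y\|$; $h$ convex on $Q$; $f(x)=\max_i f_i(x)+h(x)$. A prox-function is a continuously differentiable $d:Q\to\mathbb{R}$, $1$-strongly convex w.r.t. $\|\cdot\|$; $V(x,y)=d(x)-d(y)-\langle\nabla d(y),x-y\rangle$. Method (with $x_0\in Q$, $0<L_0\le L$): $y_0=u_0=x_0$, $L_1=L_0/2$, $\alpha_0=A_0=0$. Step $k+1$ with current $L_{k+1}$: (i) $\alpha_{k+1}$ is the largest root of $A_k+\alpha=L_{k+1}\alpha^2$, $A_{k+1}=A_k+\alpha_{k+1}$; (ii) $y_{k+1}=(\alpha_{k+1}u_k+A_kx_k)/A_{k+1}$; (iii) $u_{k+1}=\arg\min_{x\in Q}\{V(x,u_k)+\alpha_{k+1}(\max_j[f_j(y_{k+1})+\langle\nabla f_j(y_{k+1}),x-y_{k+1}\rangle]+h(x))\}$; (iv) $x_{k+1}=(\alpha_{k+1}u_{k+1}+A_kx_k)/A_{k+1}$;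 (v) if $f(x_{k+1})\le\max_j\{f_j(y_{k+1})+\langle\nabla f_j(y_{k+1}),x_{k+1}-y_{k+1}\rangle\}+\frac{L_{k+1}}{2}\|x_{k+1}-y_{k+1}\|^2+h(x_{k+1})$, set $L_{k+2}=L_{k+1}/2$ and go to the next step; otherwise replace $L_{k+1}$ by $2L_{k+1}$ and repeat step $k+1$ from (i). *)

theory Defs
  imports "HOL-Analysis.Analysis"
begin

definition is_norm :: "('a::euclidean_space \<Rightarrow> real) \<Rightarrow> bool" where
  "is_norm N \<longleftrightarrow> (\<forall>x. 0 \<le> N x) \<and> (\<forall>x. N x = 0 \<longleftrightarrow> x = 0)
     \<and> (\<forall>c x. N (c *\<^sub>R x) = \<bar>c\<bar> * N x) \<and> (\<forall>x y. N (x + y) \<le> N x + N y)"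

definition dual_norm :: "('a::euclidean_space \<Rightarrow> real) \<Rightarrow> 'a \<Rightarrow> real" where
  "dual_norm N l = (SUP v\<in>{v. N v \<le> 1}. l \<bullet> v)"

definition strongly_convex_wrt :: "('a::euclidean_space \<Rightarrow> real) \<Rightarrow> real \<Rightarrow> 'a set \<Rightarrow> ('a \<Rightarrow> real) \<Rightarrow> bool" where
  "strongly_convex_wrt N \<sigma> Q d \<longleftrightarrow>
     (\<forall>x\<in>Q. \<forall>y\<in>Q. \<forall>t::real. 0 \<le> t \<and> t \<le> 1 \<longrightarrow>
        d ((1 - t) *\<^sub>R x + t *\<^sub>R y) \<le> (1 - t) * d x + t * d y - \<sigma> / 2 * t * (1 - t) * (N (x - y))\<^sup>2)"

definition Vb :: "('a::euclidean_space \<Rightarrow> real) \<Rightarrow> ('a \<Rightarrow> 'a) \<Rightarrow> 'a \<Rightarrow> 'a \<Rightarrow> real" where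
  "Vb d Dd x y = d x - d y - Dd y \<bullet> (x - y)"

definition fobj :: "nat \<Rightarrow> (nat \<Rightarrow> 'a::euclidean_space \<Rightarrow> real) \<Rightarrow> ('a \<Rightarrow> real) \<Rightarrow> 'a \<Rightarrow> real" where
  "fobj M F h x = Max ((\<lambda>j. F j x) ` {..<M}) + h x"

definition lin_max :: "nat \<Rightarrow> (nat \<Rightarrow> 'a::euclidean_space \<Rightarrow> real) \<Rightarrow> (nat \<Rightarrow> 'a \<Rightarrow> 'a) \<Rightarrow> 'a \<Rightarrow> 'a \<Rightarrow> real" where
  "lin_max M F G y x = Max ((\<lambda>j. F j y + G j y \<bullet> (x - y)) ` {..<M})"

text \<open>Items (i)-(iv) of one step, performed with trial constant Lt from the
  state (Ak, xk, uk), producing (alpha, A', y, u, x).\<close>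
definition mt_step ::
  "'a set \<Rightarrow> nat \<Rightarrow> (nat \<Rightarrow> 'a::euclidean_space \<Rightarrow> real) \<Rightarrow> (nat \<Rightarrow> 'a \<Rightarrow> 'a) \<Rightarrow> ('a \<Rightarrow> real)
   \<Rightarrow> ('a \<Rightarrow> real) \<Rightarrow> ('a \<Rightarrow> 'a) \<Rightarrow> real \<Rightarrow> real \<Rightarrow> 'a \<Rightarrow> 'a
   \<Rightarrow> real \<Rightarrow> real \<Rightarrow> 'a \<Rightarrow> 'a \<Rightarrow> 'a \<Rightarrow> bool" where
  "mt_step Q M F G h d Dd Lt Ak xk uk a A' y u x \<longleftrightarrow>
     Lt * a\<^sup>2 = Ak + a \<and> (\<forall>b. Lt * b\<^sup>2 = Ak + b \<longrightarrow> b \<le> a) \<and>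
     A' = Ak + a \<and>
     y = (1 / A') *\<^sub>R (a *\<^sub>R uk + Ak *\<^sub>R xk) \<and>
     u \<in> Q \<and>
     (\<forall>z\<in>Q. Vb d Dd u uk + a * (lin_max M F G y u + h u)
              \<le> Vb d Dd z uk + a * (lin_max M F G y z + h z)) \<and>
     x = (1 / A') *\<^sub>R (a *\<^sub>R u + Ak *\<^sub>R xk)"

definition mt_accept ::
  "('a::euclidean_space \<Rightarrow> real) \<Rightarrow> nat \<Rightarrow> (nat \<Rightarrow> 'a \<Rightarrow> real) \<Rightarrow> (nat \<Rightarrow> 'a \<Rightarrow> 'a) \<Rightarrow> ('a \<Rightarrow> real)
   \<Rightarrow> real \<Rightarrow> 'a \<Rightarrow> 'a \<Rightarrow> bool" where
  "mt_accept N M F G h Lt y x \<longleftrightarrow>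
     fobj M F h x \<le> lin_max M F G y x + Lt / 2 * (N (x - y))\<^sup>2 + h x"

text \<open>Lacc (k+1) is the value of L_{k+1} accepted at step k+1; Lacc 0 = L0 is a
  convention so that the starting trial value of step k+1 is Lacc k / 2
  (i.e. L_1 = L0/2 and L_{k+2} = L_{k+1}/2).\<close>
definition mt_run ::
  "('a::euclidean_space \<Rightarrow> real) \<Rightarrow> 'a set \<Rightarrow> nat \<Rightarrow> (nat \<Rightarrow> 'a \<Rightarrow> real) \<Rightarrow> (nat \<Rightarrow> 'a \<Rightarrow> 'a)
   \<Rightarrow> ('a \<Rightarrow> real) \<Rightarrow> ('a \<Rightarrow> real) \<Rightarrow> ('a \<Rightarrow> 'a) \<Rightarrow> real \<Rightarrow> 'a
   \<Rightarrow> (nat \<Rightarrow> real) \<Rightarrow> (nat \<Rightarrow> real) \<Rightarrow> (nat \<Rightarrow> real)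
   \<Rightarrow> (nat \<Rightarrow> 'a) \<Rightarrow> (nat \<Rightarrow> 'a) \<Rightarrow> (nat \<Rightarrow> 'a) \<Rightarrow> nat \<Rightarrow> bool" where
  "mt_run N Q M F G h d Dd L0 x0 Lacc \<alpha> A y u x K \<longleftrightarrow>
     x 0 = x0 \<and> y 0 = x0 \<and> u 0 = x0 \<and> \<alpha> 0 = 0 \<and> A 0 = 0 \<and> Lacc 0 = L0 \<and>
     (\<forall>k<K. \<exists>m::nat.
        Lacc (Suc k) = Lacc k / 2 * 2 ^ m \<and>
        mt_step Q M F G h d Dd (Lacc (Suc k)) (A k) (x k) (u k)
                (\<alpha> (Suc k)) (A (Suc k)) (y (Suc k)) (u (Suc k)) (x (Suc k)) \<and>
        mt_accept N M F G h (Lacc (Suc k)) (y (Suc k)) (x (Suc k)) \<and>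
        (\<forall>m'<m. \<forall>a A' y' u' x'.
           mt_step Q M F G h d Dd (Lacc k / 2 * 2 ^ m') (A k) (x k) (u k) a A' y' u' x'
           \<longrightarrow> \<not> mt_accept N M F G h (Lacc k / 2 * 2 ^ m') y' x'))"

end

theory Submission imports Defs begin

lemma dir_deriv:
  fixes g :: "'a::euclidean_space \<Rightarrow> real"
  assumes Q: "convex Q" and p: "p\<in>Q" and q: "q\<in>Q"
    and dg: "(g has_derivative (\<lambda>v. D \<bullet> v)) (at p within Q)"
  shows "((\<lambda>t. (g (p + t *\<^sub>R (q - p)) - g p) / t) \<longlongrightarrow> D \<bullet> (q - p)) (at_right 0)"
proof -
  define \<gamma> where "\<gamma> = (\<lambda>t::real. p + t *\<^sub>R (q - p))"
  have img: "\<gamma> ` {0..1} \<subseteq> Q"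
  proof
    fix w assume "w \<in> \<gamma> ` {0..1}"
    then obtain t where t: "0 \<le> t" "t \<le> 1" "w = p + t *\<^sub>R (q - p)" by (auto simp: \<gamma>_def)
    have "(1 - t) *\<^sub>R p + t *\<^sub>R q \<in> Q" using convexD[OF Q p q, of "1-t" t] t by auto
    moreover have "(1 - t) *\<^sub>R p + t *\<^sub>R q = w" using t by (simp add: algebra_simps)
    ultimately show "w \<in> Q" by simp
  qed
  have d\<gamma>: "(\<gamma> has_derivative (\<lambda>t. t *\<^sub>R (q-p))) (at 0 within {0..1})"
    unfolding \<gamma>_def by (auto intro!: derivative_eq_intros)
  have "(g has_derivative (\<lambda>v. D \<bullet> v)) (at (\<gamma> 0) within \<gamma> ` {0..1})"
    using has_derivative_subset[OF dg img] by (simp add: \<gamma>_def)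
  from diff_chain_within[OF d\<gamma> this]
  have "(g \<circ> \<gamma> has_derivative (\<lambda>t. D \<bullet> (t *\<^sub>R (q-p)))) (at 0 within {0..1})"
    by (simp add: o_def)
  moreover have "(\<lambda>t. D \<bullet> (t *\<^sub>R (q-p))) = (*) (D \<bullet> (q - p))"
    by (auto simp: fun_eq_iff)
  ultimately have "(g \<circ> \<gamma> has_field_derivative (D \<bullet> (q - p))) (at 0 within {0..1})"
    by (simp add: has_field_derivative_def)
  then have "((\<lambda>t. ((g \<circ> \<gamma>) t - (g \<circ> \<gamma>) 0) / (t - 0)) \<longlongrightarrow> D \<bullet> (q - p)) (at_right 0)"
    unfolding has_field_derivative_iff using at_within_Icc_at_right[of "0::real" 1] by simp
  then show ?thesis by (simp add: \<gamma>_def)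
qed

lemma eventually_01: "eventually (\<lambda>t::real. 0 < t \<and> t \<le> 1) (at_right 0)"
  using eventually_at_right_real[of 0 1] by (auto elim: eventually_mono)

lemma grad_ineq:
  fixes g :: "'a::euclidean_space \<Rightarrow> real"
  assumes Q: "convex Q" and p: "p\<in>Q" and q: "q\<in>Q" and cv: "convex_on Q g"
    and dg: "(g has_derivative (\<lambda>v. D \<bullet> v)) (at p within Q)"
  shows "g p + D \<bullet> (q - p) \<le> g q"
proof -
  have "D \<bullet> (q - p) \<le> g q - g p"
  proof (rule tendsto_le[OF _ tendsto_const dir_deriv[OF Q p q dg]])
    show "at_right (0::real) \<noteq> bot" by simp
    show "\<forall>\<^sub>F t in at_right 0. (g (p + t *\<^sub>R (q - p)) - g p) / t \<le> g q - g p"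
      using eventually_01
    proof (rule eventually_mono)
      fix t :: real assume t: "0 < t \<and> t \<le> 1"
      have "g ((1 - t) *\<^sub>R p + t *\<^sub>R q) \<le> (1 - t) * g p + t * g q"
        using convex_onD[OF cv, of t p q] t p q by auto
      moreover have "(1 - t) *\<^sub>R p + t *\<^sub>R q = p + t *\<^sub>R (q - p)" by (simp add: algebra_simps)
      ultimately have "g (p + t *\<^sub>R (q - p)) - g p \<le> t * (g q - g p)" by (simp add: algebra_simps)
      then show "(g (p + t *\<^sub>R (q - p)) - g p) / t \<le> g q - g p" using t by (simp add: divide_simps mult.commute)
    qed
  qed
  then show ?thesis by simp
qed

lemma sc_bound:
  fixes d :: "'a::euclidean_space \<Rightarrow> real"
  assumes Q: "convex Q" and p: "p\<in>Q" and q: "q\<in>Q" and sc: "strongly_convex_wrt N 1 Q d"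
    and nN: "is_norm N"
    and dg: "(d has_derivative (\<lambda>v. D \<bullet> v)) (at p within Q)"
  shows "1/2 * (N (q - p))\<^sup>2 \<le> d q - d p - D \<bullet> (q - p)"
proof -
  have lim2: "((\<lambda>t. d q - d p - 1/2 * (1 - t) * (N (q - p))\<^sup>2) \<longlongrightarrow> d q - d p - 1/2 * (1 - 0) * (N (q - p))\<^sup>2) (at_right 0)"
    by (intro tendsto_intros)
  have "D \<bullet> (q - p) \<le> d q - d p - 1/2 * (1 - 0) * (N (q - p))\<^sup>2"
  proof (rule tendsto_le[OF _ lim2 dir_deriv[OF Q p q dg]])
    show "at_right (0::real) \<noteq> bot" by simp
    show "\<forall>\<^sub>F t in at_right 0. (d (p + t *\<^sub>R (q - p)) - d p) / t \<le> d q - d p - 1/2 * (1 - t) * (N (q - p))\<^sup>2"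
      using eventually_01
    proof (rule eventually_mono)
      fix t :: real assume t: "0 < t \<and> t \<le> 1"
      have "d ((1 - t) *\<^sub>R p + t *\<^sub>R q) \<le> (1 - t) * d p + t * d q - 1 / 2 * t * (1 - t) * (N (p - q))\<^sup>2"
        using sc p q t unfolding strongly_convex_wrt_def by auto
      moreover have "(1 - t) *\<^sub>R p + t *\<^sub>R q = p + t *\<^sub>R (q - p)" by (simp add: algebra_simps)
      moreover have "N (p - q) = N (q - p)"
      proof -
        have "N (p - q) = N ((-1) *\<^sub>R (q - p))" by simp
        also have "\<dots> = N (q - p)" using nN unfolding is_norm_def by (metis abs_minus_cancel abs_one mult_1)
        finally show ?thesis .
      qed
      ultimately have "d (p + t *\<^sub>R (q - p)) - d p \<le> t * (d q - d p - 1/2 * (1 - t) * (N (q - p))\<^sup>2)"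
        by (simp add: algebra_simps)
      then show "(d (p + t *\<^sub>R (q - p)) - d p) / t \<le> d q - d p - 1/2 * (1 - t) * (N (q - p))\<^sup>2"
        using t by (simp add: divide_simps mult.commute)
    qed
  qed
  then show ?thesis by simp
qed

lemma prox:
  fixes d :: "'a::euclidean_space \<Rightarrow> real"
  assumes Q: "convex Q" and u: "u\<in>Q" and uk: "uk \<in> Q" and z: "z\<in>Q"
    and dd: "\<forall>p\<in>Q. (d has_derivative (\<lambda>v. Dd p \<bullet> v)) (at p within Q)"
    and cvx: "\<forall>t. 0 \<le> t \<and> t \<le> 1 \<longrightarrow> \<phi> (u + t *\<^sub>R (z - u)) \<le> (1 - t) * \<phi> u + t * \<phi> z"
    and opt: "\<forall>w\<in>Q. Vb d Dd u uk + \<phi> u \<le> Vb d Dd w uk + \<phi> w"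
  shows "Vb d Dd u uk + \<phi> u + Vb d Dd z u \<le> Vb d Dd z uk + \<phi> z"
proof -
  have "Dd uk \<bullet> (z - u) - (\<phi> z - \<phi> u) \<le> Dd u \<bullet> (z - u)"
  proof (rule tendsto_lowerbound[OF dir_deriv[OF Q u z dd[rule_format, OF u]]])
    show "at_right (0::real) \<noteq> bot" by simp
    show "\<forall>\<^sub>F t in at_right 0. Dd uk \<bullet> (z - u) - (\<phi> z - \<phi> u) \<le> (d (u + t *\<^sub>R (z - u)) - d u) / t"
      using eventually_01
    proof (rule eventually_mono)
      fix t :: real assume t: "0 < t \<and> t \<le> 1"
      define w where "w = u + t *\<^sub>R (z - u)"
      have "(1 - t) *\<^sub>R u + t *\<^sub>R z \<in> Q" using convexD[OF Q u z, of "1-t" t] t by auto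
      moreover have "(1 - t) *\<^sub>R u + t *\<^sub>R z = w" by (simp add: w_def algebra_simps)
      ultimately have wQ: "w \<in> Q" by simp
      have "Vb d Dd u uk + \<phi> u \<le> Vb d Dd w uk + \<phi> w" using opt wQ by blast
      moreover have "\<phi> w \<le> (1 - t) * \<phi> u + t * \<phi> z" using cvx t by (simp add: w_def)
      moreover have "Vb d Dd w uk - Vb d Dd u uk = d w - d u - t * (Dd uk \<bullet> (z - u))"
        by (simp add: Vb_def w_def inner_diff_right inner_add_right algebra_simps)
      ultimately have "t * (Dd uk \<bullet> (z - u) - (\<phi> z - \<phi> u)) \<le> d w - d u"
        by (simp add: algebra_simps)
      then show "Dd uk \<bullet> (z - u) - (\<phi> z - \<phi> u) \<le> (d (u + t *\<^sub>R (z - u)) - d u) / t"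
        using t by (simp add: w_def divide_simps mult.commute)
    qed
  qed
  moreover have "Vb d Dd z uk - Vb d Dd z u - Vb d Dd u uk = Dd u \<bullet> (z - u) - Dd uk \<bullet> (z - u)"
    by (simp add: Vb_def inner_diff_right algebra_simps)
  ultimately show ?thesis by linarith
qed

lemma lin_max_comb:
  assumes M: "0 < M" and c: "c1 + c2 = 1" "0 \<le> c1" "0 \<le> c2"
  shows "lin_max M F G y (c1 *\<^sub>R p + c2 *\<^sub>R q) \<le> c1 * lin_max M F G y p + c2 * lin_max M F G y q"
  unfolding lin_max_def
proof (rule Max.boundedI)
  show "finite ((\<lambda>j. F j y + G j y \<bullet> (c1 *\<^sub>R p + c2 *\<^sub>R q - y)) ` {..<M})" by simp
  show "(\<lambda>j. F j y + G j y \<bullet> (c1 *\<^sub>R p + c2 *\<^sub>R q - y)) ` {..<M} \<noteq> {}" using M by auto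
  fix v assume "v \<in> (\<lambda>j. F j y + G j y \<bullet> (c1 *\<^sub>R p + c2 *\<^sub>R q - y)) ` {..<M}"
  then obtain j where j: "j < M" and v: "v = F j y + G j y \<bullet> (c1 *\<^sub>R p + c2 *\<^sub>R q - y)" by auto
  have "c1 *\<^sub>R p + c2 *\<^sub>R q - y = c1 *\<^sub>R (p - y) + c2 *\<^sub>R (q - y)"
    using c by (simp add: algebra_simps flip: scaleR_add_left)
  then have "v = c1 * (F j y + G j y \<bullet> (p - y)) + c2 * (F j y + G j y \<bullet> (q - y))"
    using c v by (simp add: inner_add_right algebra_simps flip: distrib_right)
  moreover have "F j y + G j y \<bullet> (p - y) \<le> Max ((\<lambda>j. F j y + G j y \<bullet> (p - y)) ` {..<M})"
    using j by (intro Max_ge) auto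
  moreover have "F j y + G j y \<bullet> (q - y) \<le> Max ((\<lambda>j. F j y + G j y \<bullet> (q - y)) ` {..<M})"
    using j by (intro Max_ge) auto
  ultimately show "v \<le> c1 * Max ((\<lambda>j. F j y + G j y \<bullet> (p - y)) ` {..<M}) + c2 * Max ((\<lambda>j. F j y + G j y \<bullet> (q - y)) ` {..<M})"
    using c by (simp add: add_mono mult_left_mono)
qed

lemma lin_max_le:
  assumes M: "0 < M" and Q: "convex Q" and y: "y \<in> Q" and w: "w \<in> Q"
    and F_convex: "\<forall>j<M. convex_on Q (F j)"
    and F_diff: "\<forall>j<M. \<forall>p\<in>Q. (F j has_derivative (\<lambda>v. G j p \<bullet> v)) (at p)"
  shows "lin_max M F G y w \<le> Max ((\<lambda>j. F j w) ` {..<M})"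
  unfolding lin_max_def
proof (rule Max.boundedI)
  show "finite ((\<lambda>j. F j y + G j y \<bullet> (w - y)) ` {..<M})" by simp
  show "(\<lambda>j. F j y + G j y \<bullet> (w - y)) ` {..<M} \<noteq> {}" using M by auto
  fix v assume "v \<in> (\<lambda>j. F j y + G j y \<bullet> (w - y)) ` {..<M}"
  then obtain j where j: "j < M" and v: "v = F j y + G j y \<bullet> (w - y)" by auto
  have c1: "convex_on Q (F j)" using j F_convex by auto
  have c2: "(F j has_derivative (\<lambda>v. G j y \<bullet> v)) (at y within Q)"
    using j F_diff y by (auto intro: has_derivative_at_withinI)
  have "v \<le> F j w" unfolding v using grad_ineq[OF Q y w c1 c2] .
  also have "F j w \<le> Max ((\<lambda>j. F j w) ` {..<M})" using j by (intro Max_ge) auto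
  finally show "v \<le> Max ((\<lambda>j. F j w) ` {..<M})" .
qed

lemma pos_root:
  fixes L Ak a :: real
  assumes L: "0 < L" and Ak: "0 \<le> Ak" and big: "\<forall>b. L * b\<^sup>2 = Ak + b \<longrightarrow> b \<le> a"
  shows "0 < a"
proof -
  define s where "s = sqrt (1 + 4 * L * Ak)"
  have s2: "s\<^sup>2 = 1 + 4 * L * Ak" unfolding s_def using L Ak by simp
  have s0: "0 \<le> s" unfolding s_def using L Ak by simp
  define b where "b = (1 + s) / (2 * L)"
  have "L * b\<^sup>2 = Ak + b"
    unfolding b_def using L s2 by (simp add: power2_eq_square field_simps)
  then have "b \<le> a" using big by blast
  moreover have "0 < b" unfolding b_def using L s0 by simp
  ultimately show ?thesis by simp
qed

lemma run_inv:
  assumes Q: "convex Q" and x0: "x0 \<in> Q" and L0: "0 < L0"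
    and run: "mt_run N Q M F G h d Dd L0 x0 Lacc \<alpha> A y u x K"
  shows "n \<le> K \<Longrightarrow> 0 < Lacc n \<and> 0 \<le> A n \<and> x n \<in> Q \<and> u n \<in> Q"
proof (induction n)
  case 0
  then show ?case using run x0 L0 by (simp add: mt_run_def)
next
  case (Suc k)
  then have kK: "k < K" by simp
  with Suc have IH: "0 < Lacc k" "0 \<le> A k" "x k \<in> Q" "u k \<in> Q" by auto
  from run kK obtain m where Lk: "Lacc (Suc k) = Lacc k / 2 * 2 ^ m"
    and st: "mt_step Q M F G h d Dd (Lacc (Suc k)) (A k) (x k) (u k)
                (\<alpha> (Suc k)) (A (Suc k)) (y (Suc k)) (u (Suc k)) (x (Suc k))"
    unfolding mt_run_def by blast
  have Lp: "0 < Lacc (Suc k)" unfolding Lk using IH by simp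
  from st have big: "\<forall>b. Lacc (Suc k) * b\<^sup>2 = A k + b \<longrightarrow> b \<le> \<alpha> (Suc k)"
    and Aeq: "A (Suc k) = A k + \<alpha> (Suc k)" and uQ: "u (Suc k) \<in> Q"
    and xeq: "x (Suc k) = (1 / A (Suc k)) *\<^sub>R (\<alpha> (Suc k) *\<^sub>R u (Suc k) + A k *\<^sub>R x k)"
    unfolding mt_step_def by auto
  have apos: "0 < \<alpha> (Suc k)" using pos_root[OF Lp IH(2) big] .
  have Apos: "0 < A (Suc k)" using Aeq apos IH by simp
  have "x (Suc k) = (\<alpha> (Suc k) / A (Suc k)) *\<^sub>R u (Suc k) + (A k / A (Suc k)) *\<^sub>R x k"
    using xeq Apos by (simp add: scaleR_add_right)
  moreover have "(\<alpha> (Suc k) / A (Suc k)) *\<^sub>R u (Suc k) + (A k / A (Suc k)) *\<^sub>R x k \<in> Q"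
  proof (rule convexD[OF Q uQ IH(3)])
    show "\<alpha> (Suc k) / A (Suc k) + A k / A (Suc k) = 1"
      using Apos Aeq by (simp add: add_divide_distrib[symmetric])
  qed (use apos Apos IH in auto)
  ultimately have "x (Suc k) \<in> Q" by simp
  then show ?case using Lp Apos uQ by simp
qed

theorem lemma3:
  fixes N :: "'a::euclidean_space \<Rightarrow> real"
    and Q :: "'a set" and M :: nat
    and F :: "nat \<Rightarrow> 'a \<Rightarrow> real" and G :: "nat \<Rightarrow> 'a \<Rightarrow> 'a"
    and h d :: "'a \<Rightarrow> real" and Dd :: "'a \<Rightarrow> 'a"
    and L L0 :: real and x0 :: 'a
    and Lacc \<alpha> A :: "nat \<Rightarrow> real" and y u x :: "nat \<Rightarrow> 'a"
    and K k :: nat and z :: 'a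
  assumes norm: "is_norm N"
    and Q: "closed Q" "convex Q"
    and M: "0 < M"
    and F_convex: "\<forall>j<M. convex_on Q (F j)"
    and F_diff: "\<forall>j<M. \<forall>p\<in>Q. (F j has_derivative (\<lambda>v. G j p \<bullet> v)) (at p)"
    and F_Lip: "\<forall>j<M. \<forall>p\<in>Q. \<forall>q\<in>Q. dual_norm N (G j p - G j q) \<le> L * N (p - q)"
    and h_convex: "convex_on Q h"
    and d_diff: "\<forall>p\<in>Q. (d has_derivative (\<lambda>v. Dd p \<bullet> v)) (at p within Q)"
    and d_cont: "continuous_on Q Dd"
    and d_sc: "strongly_convex_wrt N 1 Q d"
    and x0: "x0 \<in> Q"
    and L0: "0 < L0" "L0 \<le> L"
    and run: "mt_run N Q M F G h d Dd L0 x0 Lacc \<alpha> A y u x K"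
    and k: "k < K"
    and z: "z \<in> Q"
  shows "A (Suc k) * fobj M F h (x (Suc k)) - A k * fobj M F h (x k)
           + Vb d Dd z (u (Suc k)) - Vb d Dd z (u k)
         \<le> \<alpha> (Suc k) * fobj M F h z"
proof -
  have cQ: "convex Q" using Q by simp
  have inv: "\<And>n. n \<le> K \<Longrightarrow> 0 < Lacc n \<and> 0 \<le> A n \<and> x n \<in> Q \<and> u n \<in> Q"
    using run_inv[OF cQ x0 L0(1) run] by blast
  have IH: "0 < Lacc k" "0 \<le> A k" "x k \<in> Q" "u k \<in> Q" using inv[of k] k by auto
  have IS: "0 < Lacc (Suc k)" "0 \<le> A (Suc k)" "x (Suc k) \<in> Q" "u (Suc k) \<in> Q"
    using inv[of "Suc k"] k by auto
  from run k obtain m where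
        st: "mt_step Q M F G h d Dd (Lacc (Suc k)) (A k) (x k) (u k)
                (\<alpha> (Suc k)) (A (Suc k)) (y (Suc k)) (u (Suc k)) (x (Suc k))"
    and acc: "mt_accept N M F G h (Lacc (Suc k)) (y (Suc k)) (x (Suc k))"
    unfolding mt_run_def by blast
  define a where "a = \<alpha> (Suc k)"
  define A' where "A' = A (Suc k)"
  define Ak where "Ak = A k"
  define L' where "L' = Lacc (Suc k)"
  define xk where "xk = x k"
  define uk where "uk = u k"
  define x' where "x' = x (Suc k)"
  define u' where "u' = u (Suc k)"
  define y' where "y' = y (Suc k)"
  define lm where "lm = lin_max M F G y'"
  define fm where "fm = (\<lambda>w. Max ((\<lambda>j. F j w) ` {..<M}))"
  have fo: "\<And>w. fobj M F h w = fm w + h w" by (simp add: fobj_def fm_def)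
  from st have root: "L' * a\<^sup>2 = Ak + a" and big: "\<forall>b. L' * b\<^sup>2 = Ak + b \<longrightarrow> b \<le> a"
    and Aeq: "A' = Ak + a"
    and yeq: "y' = (1 / A') *\<^sub>R (a *\<^sub>R uk + Ak *\<^sub>R xk)"
    and opt: "\<forall>w\<in>Q. Vb d Dd u' uk + a * (lm u' + h u') \<le> Vb d Dd w uk + a * (lm w + h w)"
    and xeq: "x' = (1 / A') *\<^sub>R (a *\<^sub>R u' + Ak *\<^sub>R xk)"
    unfolding mt_step_def a_def A'_def Ak_def L'_def xk_def uk_def x'_def u'_def y'_def lm_def
    by auto
  have Lp: "0 < L'" and Ak0: "0 \<le> Ak" and xkQ: "xk \<in> Q" and ukQ: "uk \<in> Q"
    and u'Q: "u' \<in> Q" and x'Q: "x' \<in> Q"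
    using IH IS by (auto simp: L'_def Ak_def xk_def uk_def u'_def x'_def)
  have apos: "0 < a" using pos_root[OF Lp Ak0 big] .
  have Apos: "0 < A'" using Aeq apos Ak0 by simp
  define c1 where "c1 = a / A'"
  define c2 where "c2 = Ak / A'"
  have c: "c1 + c2 = 1" "0 \<le> c1" "0 \<le> c2"
    using Apos Aeq apos Ak0 by (auto simp: c1_def c2_def add_divide_distrib[symmetric])
  have x'c: "x' = c1 *\<^sub>R u' + c2 *\<^sub>R xk"
    using xeq Apos by (simp add: c1_def c2_def scaleR_add_right)
  have y'c: "y' = c1 *\<^sub>R uk + c2 *\<^sub>R xk"
    using yeq Apos by (simp add: c1_def c2_def scaleR_add_right)
  have y'Q: "y' \<in> Q" unfolding y'c using convexD[OF cQ ukQ xkQ c(2) c(3) c(1)] .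
  have dxy: "x' - y' = c1 *\<^sub>R (u' - uk)" unfolding x'c y'c by (simp add: algebra_simps)
  have Nxy: "N (x' - y') = c1 * N (u' - uk)"
    using norm c(2) unfolding dxy is_norm_def by simp
  have coef: "L' / 2 * c1\<^sup>2 = 1 / (2 * A')"
  proof -
    have LA: "L' * a\<^sup>2 = A'" using root Aeq by simp
    have "L' / 2 * c1\<^sup>2 = (L' * a\<^sup>2) / (2 * A'\<^sup>2)" by (simp add: c1_def power_divide)
    also have "\<dots> = 1 / (2 * A')" unfolding LA using Apos by (simp add: power2_eq_square)
    finally show ?thesis .
  qed
  have acc': "fobj M F h x' \<le> lm x' + L' / 2 * (N (x' - y'))\<^sup>2 + h x'"
    using acc unfolding mt_accept_def lm_def x'_def y'_def L'_def .
  have q2: "L' / 2 * (N (x' - y'))\<^sup>2 = (1 / (2 * A')) * (N (u' - uk))\<^sup>2"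
    unfolding Nxy coef[symmetric] by (simp add: power_mult_distrib)
  have l1: "lm x' \<le> c1 * lm u' + c2 * lm xk"
    unfolding lm_def x'c by (rule lin_max_comb[OF M c])
  have h1: "h x' \<le> c1 * h u' + c2 * h xk"
  proof -
    have "1 - c2 = c1" using c by simp
    then show ?thesis unfolding x'c using convex_onD[OF h_convex, of c2 u' xk] c u'Q xkQ by (simp only:)
  qed
  have l2: "lm xk \<le> fm xk" unfolding lm_def fm_def
    by (rule lin_max_le[OF M cQ y'Q xkQ F_convex F_diff])
  have l3: "lm z \<le> fm z" unfolding lm_def fm_def
    by (rule lin_max_le[OF M cQ y'Q z F_convex F_diff])
  have sc: "1/2 * (N (u' - uk))\<^sup>2 \<le> Vb d Dd u' uk"
    using sc_bound[OF cQ ukQ u'Q d_sc norm] d_diff ukQ by (simp add: Vb_def)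
  have "fobj M F h x' \<le> c1 * (lm u' + h u') + c2 * (fm xk + h xk) + (1 / (2 * A')) * (N (u' - uk))\<^sup>2"
    using acc' q2 l1 h1 l2 c mult_left_mono[OF l2 c(3)] by (simp add: algebra_simps)
  then have "A' * fobj M F h x' \<le> A' * (c1 * (lm u' + h u') + c2 * (fm xk + h xk) + (1 / (2 * A')) * (N (u' - uk))\<^sup>2)"
    using Apos by (simp add: mult_left_mono)
  also have "\<dots> = a * (lm u' + h u') + Ak * fobj M F h xk + 1/2 * (N (u' - uk))\<^sup>2"
    using Apos by (simp add: c1_def c2_def fo algebra_simps)
  finally have step1: "A' * fobj M F h x' - Ak * fobj M F h xk \<le> a * (lm u' + h u') + Vb d Dd u' uk"
    using sc by simp
  define \<phi> where "\<phi> = (\<lambda>w. a * (lm w + h w))"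
  have cvx: "\<forall>t. 0 \<le> t \<and> t \<le> 1 \<longrightarrow> \<phi> (u' + t *\<^sub>R (z - u')) \<le> (1 - t) * \<phi> u' + t * \<phi> z"
  proof (intro allI impI)
    fix t :: real assume t: "0 \<le> t \<and> t \<le> 1"
    have pt: "u' + t *\<^sub>R (z - u') = (1 - t) *\<^sub>R u' + t *\<^sub>R z" by (simp add: algebra_simps)
    have "lm (u' + t *\<^sub>R (z - u')) \<le> (1 - t) * lm u' + t * lm z"
      unfolding pt lm_def by (rule lin_max_comb[OF M]) (use t in auto)
    moreover have "h (u' + t *\<^sub>R (z - u')) \<le> (1 - t) * h u' + t * h z"
      unfolding pt using convex_onD[OF h_convex, of t u' z] t u'Q z by simp
    ultimately have "lm (u' + t *\<^sub>R (z - u')) + h (u' + t *\<^sub>R (z - u')) \<le> (1 - t) * (lm u' + h u') + t * (lm z + h z)"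
      by (simp add: distrib_left)
    from mult_left_mono[OF this, of a] apos
    show "\<phi> (u' + t *\<^sub>R (z - u')) \<le> (1 - t) * \<phi> u' + t * \<phi> z"
      unfolding \<phi>_def by (simp add: algebra_simps)
  qed
  have opt': "\<forall>w\<in>Q. Vb d Dd u' uk + \<phi> u' \<le> Vb d Dd w uk + \<phi> w"
    using opt by (simp add: \<phi>_def)
  have pr: "Vb d Dd u' uk + \<phi> u' + Vb d Dd z u' \<le> Vb d Dd z uk + \<phi> z"
    by (rule prox[OF cQ u'Q ukQ z d_diff cvx opt'])
  have "\<phi> z \<le> a * fobj M F h z" unfolding \<phi>_def fo using l3 apos by simp
  then have "A' * fobj M F h x' - Ak * fobj M F h xk + Vb d Dd z u' - Vb d Dd z uk \<le> a * fobj M F h z"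
    using step1 pr by (simp add: \<phi>_def)
  then show ?thesis by (simp add: a_def A'_def Ak_def xk_def uk_def x'_def u'_def)
qed

end
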